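(* Let $K$ be a field, let $n\geq 2$ and $m\geq 2$ be integers such that $\operatorname{char}(K)$ does not divide $n$, and let $f(x_1,\dots,x_m)\in K\langle x_1,\dots,x_m\rangle$ be a nonzero multilinear polynomial. If $n\geq \frac{m+1}{2}$, then the $K$-linear span of $f(M_n(K))$ contains $sl_n(K)$.
   Context: $K\langle x_1,\dots,x_m\rangle$ is the free associative algebra on noncommuting variables $x_1,\dots,x_m$. A polynomial is multilinear if it has the form $\sum_{\sigma\in S_m}\alpha_\sigma x_{\sigma(1)}\cdots x_{\sigma(m)}$ with $\alpha_\sigma\in K$. $M_n(K)$ is the algebra of $n\times n$ matrices over $K$, $f(M_n(K))=\{f(a_1,\dots,a_m): a_i\in M_n(K)\}$ is the image of $f$ on $M_n(K)$, and $sl_n(K)$ is the set of trace zero matrices in $M_n(K)$. *)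

theory Defs
  imports "HOL-Analysis.Analysis"
begin

definition matscale :: "'a::field \<Rightarrow> 'a^'n^'n \<Rightarrow> 'a^'n^'n" where
  "matscale c M = (\<chi> i j. c * (M $ i $ j))"

definition mat_span :: "('a::field^'n^'n) set \<Rightarrow> ('a^'n^'n) set" where
  "mat_span S = module.span matscale S"

definition ordered_prod :: "nat \<Rightarrow> (nat \<Rightarrow> nat) \<Rightarrow> (nat \<Rightarrow> 'a::semiring_1^'n^'n) \<Rightarrow> 'a^'n^'n" where
  "ordered_prod m s a = foldr (\<lambda>i acc. a (s i) ** acc) [1..<m+1] (mat 1)"

text \<open>Evaluation of the multilinear polynomial with coefficients alpha (indexed by the
permutations of {1..m}) at the matrices a 1, ..., a m.\<close>
definition mlpoly_eval :: "nat \<Rightarrow> ((nat \<Rightarrow> nat) \<Rightarrow> 'a::field) \<Rightarrow> (nat \<Rightarrow> 'a^'n^'n) \<Rightarrow> 'a^'n^'n" where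
  "mlpoly_eval m alpha a = (\<Sum>s\<in>{s. s permutes {1..m}}. matscale (alpha s) (ordered_prod m s a))"

definition mlpoly_image :: "nat \<Rightarrow> ((nat \<Rightarrow> nat) \<Rightarrow> 'a::field) \<Rightarrow> ('a^'n^'n) set" where
  "mlpoly_image m alpha = {mlpoly_eval m alpha a | a. True}"

definition sl :: "('a::field^'n^'n) set" where
  "sl = {A. trace A = 0}"

end

theory Submission
  imports Defs
begin


lemma module_matscale: "module (matscale :: 'a::field \<Rightarrow> 'a^'n^'n \<Rightarrow> _)"
  by unfold_locales (simp_all add: matscale_def vec_eq_iff algebra_simps)

lemma span_scale': "x \<in> mat_span S \<Longrightarrow> matscale c x \<in> mat_span S"
  unfolding mat_span_def by (rule module.span_scale[OF module_matscale])
lemma span_base': "x \<in> S \<Longrightarrow> x \<in> mat_span S"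
  unfolding mat_span_def by (rule module.span_base[OF module_matscale])
lemma span_add': "x \<in> mat_span S \<Longrightarrow> y \<in> mat_span S \<Longrightarrow> x + y \<in> mat_span S"
  unfolding mat_span_def by (rule module.span_add[OF module_matscale])
lemma span_diff': "x \<in> mat_span S \<Longrightarrow> y \<in> mat_span S \<Longrightarrow> x - y \<in> mat_span S"
  unfolding mat_span_def by (rule module.span_diff[OF module_matscale])
lemma span_zero': "0 \<in> mat_span S"
  unfolding mat_span_def by (rule module.span_zero[OF module_matscale])
lemma span_sum': "(\<And>x. x \<in> A \<Longrightarrow> f x \<in> mat_span S) \<Longrightarrow> sum f A \<in> mat_span S"
  unfolding mat_span_def by (rule module.span_sum[OF module_matscale])

lemma matscale_inv: "(c::'a::field) \<noteq> 0 \<Longrightarrow> matscale (1/c) (matscale c (X::'a^'n^'n)) = X"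
  by (simp add: matscale_def vec_eq_iff)

lemma matscale_0[simp]: "matscale c 0 = 0"
  by (simp add: matscale_def vec_eq_iff)

lemma matrix_add_rdistrib': "((A::'a::field^'n^'n) + B) ** C = A ** C + B ** C"
  by (simp add: matrix_matrix_mult_def vec_eq_iff sum.distrib distrib_right)
lemma matrix_sub_ldistrib': "(A::'a::field^'n^'n) ** (B - C) = A ** B - A ** C"
  by (simp add: matrix_matrix_mult_def vec_eq_iff sum_subtractf right_diff_distrib)
lemma matrix_sub_rdistrib': "((A::'a::field^'n^'n) - B) ** C = A ** C - B ** C"
  by (simp add: matrix_matrix_mult_def vec_eq_iff sum_subtractf left_diff_distrib)

definition E :: "'n \<Rightarrow> 'n \<Rightarrow> 'a::field^'n^'n" where
  "E i j = (\<chi> r c. if r = i \<and> c = j then 1 else 0)"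

lemma E_mult: "E a b ** E c d = (if b = c then E a d else (0::'a::field^'n^'n))"
proof -
  have "(\<Sum>k\<in>UNIV. (if r = a \<and> k = b then 1 else 0) * (if k = c \<and> s = d then 1 else 0)) =
        (if r = a \<and> b = c \<and> s = d then 1 else (0::'a))" for r s
  proof -
    have "(\<Sum>k\<in>UNIV. (if r = a \<and> k = b then 1 else 0) * (if k = c \<and> s = d then 1 else 0)) =
        (\<Sum>k\<in>UNIV. if k = b then (if r = a \<and> b = c \<and> s = d then 1 else (0::'a)) else 0)"
      by (rule sum.cong) auto
    also have "\<dots> = (if r = a \<and> b = c \<and> s = d then 1 else (0::'a))"
      by (simp only: sum.delta finite UNIV_I if_True)
    finally show ?thesis .
  qed
  then show ?thesis
    unfolding E_def matrix_matrix_mult_def vec_eq_iff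
    by (simp add: vec_eq_iff)
qed

fun chainL :: "(nat \<Rightarrow> 'n) \<Rightarrow> (nat \<Rightarrow> 'n) \<Rightarrow> nat list \<Rightarrow> bool" where
  "chainL x y (i # j # r) = (y i = x j \<and> chainL x y (j # r))"
| "chainL x y _ = True"

lemma prod_units:
  "l \<noteq> [] \<Longrightarrow> foldr (\<lambda>i acc. E (x i) (y i) ** acc) l (mat 1) =
     (if chainL x y l then E (x (hd l)) (y (last l)) else (0::'a::field^'n^'n))"
proof (induction x y l rule: chainL.induct)
  case (1 x y i j r)
  have "foldr (\<lambda>i acc. E (x i) (y i) ** acc) (i#j#r) (mat 1) =
     E (x i) (y i) ** foldr (\<lambda>i acc. E (x i) (y i) ** acc) (j#r) (mat 1)" by simp
  also have "\<dots> = E (x i) (y i) ** (if chainL x y (j#r) then E (x j) (y (last (j#r))) else (0::'a::field^'n^'n))"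
    using 1 by simp
  finally show ?case
    by (cases "chainL x y (j#r)") (simp_all add: E_mult)
next
  case ("2_2" x y v)
  then show ?case by simp
qed simp


lemma chainL_nth: "chainL x y l \<longleftrightarrow> (\<forall>k. k + 1 < length l \<longrightarrow> y (l!k) = x (l!(k+1)))"
proof (induction x y l rule: chainL.induct)
  case (1 x y i j r)
  have "(\<forall>k. k + 1 < length (i#j#r) \<longrightarrow> y ((i#j#r)!k) = x ((i#j#r)!(k+1))) \<longleftrightarrow>
     (y i = x j \<and> (\<forall>k. k + 1 < length (j#r) \<longrightarrow> y ((j#r)!k) = x ((j#r)!(k+1))))"
  proof (intro iffI conjI allI impI)
    fix k assume h: "y i = x j \<and> (\<forall>k. k + 1 < length (j#r) \<longrightarrow> y ((j#r)!k) = x ((j#r)!(k+1)))"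
      "k + 1 < length (i#j#r)"
    then show "y ((i#j#r)!k) = x ((i#j#r)!(k+1))" by (cases k) auto
  next
    fix k assume h: "\<forall>k. k + 1 < length (i#j#r) \<longrightarrow> y ((i#j#r)!k) = x ((i#j#r)!(k+1))"
      "k + 1 < length (j#r)"
    then show "y ((j#r)!k) = x ((j#r)!(k+1))" using h(1)[rule_format, of "Suc k"] by simp
  qed auto
  then show ?case using 1 by simp
qed auto

lemma chainL_upt: "chainL x y [a..<b] \<longleftrightarrow> (\<forall>i. a \<le> i \<and> i + 1 < b \<longrightarrow> y i = x (i+1))"
  unfolding chainL_nth
proof (intro iffI allI impI)
  fix i assume h: "\<forall>k. k + 1 < length [a..<b] \<longrightarrow> y ([a..<b]!k) = x ([a..<b]!(k+1))"
    "a \<le> i \<and> i + 1 < b"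
  have l: "i - a + 1 < length [a..<b]" using h(2) by auto
  have e1: "[a..<b]!(i - a) = i" and e2: "[a..<b]!(i - a + 1) = i + 1" using h(2) by auto
  have "y ([a..<b]!(i - a)) = x ([a..<b]!(i - a + 1))" using h(1) l by blast
  then show "y i = x (i+1)" unfolding e1 e2 .
next
  fix k assume h: "\<forall>i. a \<le> i \<and> i + 1 < b \<longrightarrow> y i = x (i+1)" "k + 1 < length [a..<b]"
  have e1: "[a..<b]!k = a + k" and e2: "[a..<b]!(k+1) = a + k + 1" using h(2) by auto
  have "y (a + k) = x (a + k + 1)" using h(1) h(2) by auto
  then show "y ([a..<b]!k) = x ([a..<b]!(k+1))" unfolding e1 e2 .
qed

lemma incr_le:
  assumes "\<And>i. 1 \<le> i \<Longrightarrow> i < m \<Longrightarrow> (t::nat\<Rightarrow>nat) i < t (i+1)"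
    and "1 \<le> i" "i \<le> j" "j \<le> m"
  shows "t i + j \<le> t j + i"
  using assms(3)
proof (induction j rule: dec_induct)
  case (step n)
  then show ?case using assms(1)[of n] assms(2,4) by simp
qed simp

lemma incr_id:
  assumes "\<And>i. 1 \<le> i \<Longrightarrow> i < m \<Longrightarrow> (t::nat\<Rightarrow>nat) i < t (i+1)"
    and "\<And>i. i \<in> {1..m} \<Longrightarrow> t i \<in> {1..m}"
    and "i \<in> {1..m}"
  shows "t i = i"
proof -
  have a: "t 1 + i \<le> t i + 1" using incr_le[of m t 1 i, OF assms(1)] assms(3) by auto
  have b: "t i + m \<le> t m + i" using incr_le[of m t i m, OF assms(1)] assms(3) by auto
  have "t 1 \<ge> 1" "t m \<le> m" using assms(2)[of 1] assms(2)[of m] assms(3) by auto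
  moreover have "1 \<le> i" "i \<le> m" using assms(3) by auto
  ultimately show ?thesis using a b by linarith
qed

definition walk_a :: "(nat \<Rightarrow> 'n) \<Rightarrow> (nat \<Rightarrow> nat) \<Rightarrow> nat \<Rightarrow> 'a::field^'n^'n" where
  "walk_a h s0 j = E (h ((inv s0 j - 1) div 2)) (h (inv s0 j div 2))"

lemma div_step: "(t::nat) div 2 = (u - 1) div 2 \<Longrightarrow> t \<noteq> u \<Longrightarrow> u \<ge> 1 \<Longrightarrow> t < u"
  by presburger

lemma walk_prod:
  assumes s0: "s0 permutes {1..m}" and s: "s permutes {1..m}" and m: "m \<ge> 2"
    and h: "inj_on h {0..m div 2}"
  shows "ordered_prod m s (walk_a h s0 :: nat \<Rightarrow> 'a::field^'n^'n) =
     (if s = s0 then E (h 0) (h (m div 2)) else 0)"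
proof -
  define t where "t = inv s0 \<circ> s"
  have tp: "t permutes {1..m}" unfolding t_def by (rule permutes_compose[OF s permutes_inv[OF s0]])
  define x where "x i = h ((t i - 1) div 2)" for i
  define y where "y i = h (t i div 2)" for i
  have op: "ordered_prod m s (walk_a h s0 :: nat \<Rightarrow> 'a::field^'n^'n) =
      foldr (\<lambda>i acc. E (x i) (y i) ** acc) [1..<m+1] (mat 1)"
    unfolding ordered_prod_def walk_a_def x_def y_def t_def by simp
  have ne: "[1..<m+1] \<noteq> []" using m by simp
  have hd: "hd [1..<m+1] = 1" using m by (simp add: hd_upt)
  have la: "last [1..<m+1] = m" using m by simp
  have ch: "chainL x y [1..<m+1] \<longleftrightarrow> (\<forall>i. 1 \<le> i \<and> i + 1 < m + 1 \<longrightarrow> y i = x (i+1))"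
    by (rule chainL_upt)
  show ?thesis
  proof (cases "s = s0")
    case True
    have ti: "t i = i" for i unfolding t_def True by (simp add: permutes_inverses(2)[OF s0])
    have c: "chainL x y [1..<m+1]" unfolding ch x_def y_def ti by simp
    have "ordered_prod m s (walk_a h s0 :: nat \<Rightarrow> 'a::field^'n^'n) = E (x 1) (y m)"
      unfolding op by (simp only: prod_units[OF ne] c if_True hd la)
    then show ?thesis using True by (simp add: x_def y_def ti)
  next
    case False
    have "\<not> chainL x y [1..<m+1]"
    proof
      assume c: "chainL x y [1..<m+1]"
      have inc: "t i < t (i+1)" if "1 \<le> i" "i < m" for i
      proof -
        have "y i = x (i+1)" using c that unfolding ch by simp
        then have e: "h (t i div 2) = h ((t (i+1) - 1) div 2)" unfolding x_def y_def .
        have ti: "t i \<in> {1..m}" "t (i+1) \<in> {1..m}"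
          using permutes_in_image[OF tp] that by auto
        have "t i div 2 \<in> {0..m div 2}" "(t (i+1) - 1) div 2 \<in> {0..m div 2}"
          using ti by (auto intro: div_le_mono)
        then have "t i div 2 = (t (i+1) - 1) div 2" using inj_onD[OF h e] by simp
        moreover have "t i \<noteq> t (i+1)" using permutes_inj[OF tp] by (auto dest: injD)
        ultimately show ?thesis using ti(2) by (intro div_step) auto
      qed
      have tid: "t i = i" if "i \<in> {1..m}" for i
        by (rule incr_id[of m t, OF inc _ that]) (use permutes_in_image[OF tp] in auto)
      have "s = s0"
      proof
        fix i show "s i = s0 i"
        proof (cases "i \<in> {1..m}")
          case True
          have "inv s0 (s i) = i" using tid[OF True] unfolding t_def by simp
          then have "s0 (inv s0 (s i)) = s0 i" by simp
          then show ?thesis by (simp add: permutes_inverses(1)[OF s0])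
        next
          case False
          then show ?thesis using permutes_not_in[OF s] permutes_not_in[OF s0] by metis
        qed
      qed
      then show False using False by simp
    qed
    then show ?thesis unfolding op prod_units[OF ne] using False by simp
  qed
qed

lemma eval_single:
  assumes "\<And>s. s permutes {1..m} \<Longrightarrow> ordered_prod m s b = (if s = s0 then X else 0)"
    and "s0 permutes {1..m}"
  shows "mlpoly_eval m alpha b = matscale (alpha s0) (X::'a::field^'n^'n)"
proof -
  have "mlpoly_eval m alpha b = (\<Sum>s\<in>{s. s permutes {1..m}}. if s = s0 then matscale (alpha s0) X else 0)"
    unfolding mlpoly_eval_def by (rule sum.cong) (auto simp: assms(1))
  also have "\<dots> = matscale (alpha s0) X"
    using assms(2) by (simp add: sum.delta' finite_permutations)
  finally show ?thesis .
qed

lemma conj_prod: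
  assumes "gi ** g = (mat 1 :: 'a::field^'n^'n)" "g ** gi = mat 1"
  shows "foldr (\<lambda>i acc. (g ** b i ** gi) ** acc) l (mat 1) = g ** foldr (\<lambda>i acc. b i ** acc) l (mat 1) ** gi"
proof (induction l)
  case Nil
  then show ?case using assms(2) by simp
next
  case (Cons a l)
  define P where "P = foldr (\<lambda>i acc. b i ** acc) l (mat 1)"
  have "(g ** b a ** gi) ** (g ** P ** gi) = g ** b a ** (gi ** g) ** P ** gi"
    by (simp add: matrix_mul_assoc)
  also have "\<dots> = g ** (b a ** P) ** gi" using assms(1) by (simp add: matrix_mul_assoc)
  finally show ?case using Cons unfolding P_def by simp
qed



lemma exists_h:
  assumes "p \<noteq> (q::'n::finite)" "1 \<le> d" "d + 1 \<le> CARD('n)"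
  shows "\<exists>h. inj_on h {0..d} \<and> h 0 = p \<and> h d = q"
proof -
  define R where "R = UNIV - {p, q}"
  have cR: "card R = CARD('n) - 2" unfolding R_def using assms(1)
    by (subst card_Diff_subset) auto
  obtain g where g: "bij_betw g {0..<card R} R" using ex_bij_betw_nat_finite[of R] by auto
  define h where "h i = (if i = 0 then p else if i = d then q else g (i - 1))" for i
  have mid: "h i \<in> R" "h i = g (i - 1)" if "0 < i" "i < d" for i
  proof -
    have "i - 1 \<in> {0..<card R}" using that assms(3) cR by auto
    then show "h i \<in> R" "h i = g (i - 1)" using g that unfolding h_def bij_betw_def by auto
  qed
  have "inj_on h {0..d}"
  proof (rule inj_onI)
    fix i j assume ij: "i \<in> {0..d}" "j \<in> {0..d}" "h i = h j"
    show "i = j"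
    proof (cases "0 < i \<and> i < d")
      case True
      note hi = mid[OF conjunct1[OF True] conjunct2[OF True]]
      show ?thesis
      proof (cases "0 < j \<and> j < d")
        case True2: True
        note hj = mid[OF conjunct1[OF True2] conjunct2[OF True2]]
        have "g (i - 1) = g (j - 1)" using hi hj ij(3) by simp
        moreover have "i - 1 \<in> {0..<card R}" "j - 1 \<in> {0..<card R}"
          using True True2 assms(3) cR by auto
        ultimately have "i - 1 = j - 1" using g unfolding bij_betw_def by (auto dest: inj_onD)
        then show ?thesis using True True2 by arith
      next
        case False
        then have "j = 0 \<or> j = d" using ij(2) by auto
        then have "h j \<in> {p, q}" unfolding h_def by auto
        then show ?thesis using hi ij(3) unfolding R_def by auto
      qed
    next
      case False
      then have i: "i = 0 \<or> i = d" using ij(1) by auto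
      show ?thesis
      proof (cases "0 < j \<and> j < d")
        case True2: True
        note hj = mid[OF conjunct1[OF True2] conjunct2[OF True2]]
        have "h i \<in> {p, q}" using i unfolding h_def by auto
        then show ?thesis using hj ij(3) unfolding R_def by auto
      next
        case False
        then have "j = 0 \<or> j = d" using ij(2) by auto
        then show ?thesis using i ij(3) assms(1,2) unfolding h_def by auto
      qed
    qed
  qed
  moreover have "h 0 = p" "h d = q" using assms(2) unfolding h_def by auto
  ultimately show ?thesis by blast
qed

lemma offdiag:
  fixes alpha :: "(nat \<Rightarrow> nat) \<Rightarrow> 'a::field"
  assumes s0: "s0 permutes {1..m}" and a0: "alpha s0 \<noteq> 0" and m: "m \<ge> 2"
    and mn: "2 * CARD('n::finite) \<ge> m + 1" and pq: "p \<noteq> (q::'n)"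
  shows "(E p q :: 'a^'n^'n) \<in> mat_span (mlpoly_image m alpha)"
proof -
  have "1 \<le> m div 2" "m div 2 + 1 \<le> CARD('n)" using m mn by auto
  then obtain h where h: "inj_on h {0..m div 2}" "h 0 = p" "h (m div 2) = q"
    using exists_h[OF pq] by blast
  have "mlpoly_eval m alpha (walk_a h s0 :: nat \<Rightarrow> 'a^'n^'n) = matscale (alpha s0) (E p q)"
    using eval_single[OF walk_prod[OF s0 _ m h(1)] s0] h(2,3) by simp
  then have "matscale (alpha s0) (E p q) \<in> mat_span (mlpoly_image m alpha)"
    unfolding mlpoly_image_def by (metis (mono_tags, lifting) mem_Collect_eq span_base')
  then have "matscale (1 / alpha s0) (matscale (alpha s0) (E p q)) \<in> mat_span (mlpoly_image m alpha)"
    by (rule span_scale')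
  then show ?thesis unfolding matscale_inv[OF a0] .
qed

lemma diag:
  fixes alpha :: "(nat \<Rightarrow> nat) \<Rightarrow> 'a::field"
  assumes s0: "s0 permutes {1..m}" and a0: "alpha s0 \<noteq> 0" and m: "m \<ge> 2"
    and mn: "2 * CARD('n::finite) \<ge> m + 1" and pq: "p \<noteq> (q::'n)"
  shows "(E p p - E q q :: 'a^'n^'n) \<in> mat_span (mlpoly_image m alpha)"
proof -
  have "1 \<le> m div 2" "m div 2 + 1 \<le> CARD('n)" using m mn by auto
  then obtain h where h: "inj_on h {0..m div 2}" "h 0 = q" "h (m div 2) = p"
    using exists_h[OF pq[symmetric]] by blast
  define g :: "'a^'n^'n" where "g = mat 1 + E p q"
  define gi :: "'a^'n^'n" where "gi = mat 1 - E p q"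
  have Epq2: "E p q ** E p q = (0::'a^'n^'n)" using pq by (simp add: E_mult)
  have g1: "gi ** g = mat 1" unfolding g_def gi_def
    by (simp add: matrix_add_ldistrib matrix_sub_rdistrib' Epq2)
  have g2: "g ** gi = mat 1" unfolding g_def gi_def
    by (simp add: matrix_sub_ldistrib' matrix_add_rdistrib' Epq2)
  have conj: "g ** E q p ** gi = E q p + E p p - E q q - E p q"
    unfolding g_def gi_def using pq
    by (simp add: matrix_sub_ldistrib' matrix_add_rdistrib' matrix_add_ldistrib E_mult)
  define b where "b j = g ** (walk_a h s0 :: nat \<Rightarrow> 'a^'n^'n) j ** gi" for j
  have "ordered_prod m s b = (if s = s0 then g ** E q p ** gi else 0)" if s: "s permutes {1..m}" for s
  proof -
    have A: "ordered_prod m s b = g ** ordered_prod m s (walk_a h s0 :: nat \<Rightarrow> 'a^'n^'n) ** gi"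
      unfolding ordered_prod_def b_def by (rule conj_prod[OF g1 g2])
    have w: "ordered_prod m s (walk_a h s0 :: nat \<Rightarrow> 'a^'n^'n) = (if s = s0 then E q p else 0)"
      unfolding walk_prod[OF s0 s m h(1)] h(2,3) ..
    show ?thesis unfolding A w by (cases "s = s0") simp_all
  qed
  then have "mlpoly_eval m alpha b = matscale (alpha s0) (g ** E q p ** gi)"
    using eval_single[OF _ s0] by blast
  then have "matscale (alpha s0) (g ** E q p ** gi) \<in> mat_span (mlpoly_image m alpha)"
    unfolding mlpoly_image_def by (metis (mono_tags, lifting) mem_Collect_eq span_base')
  then have "matscale (1 / alpha s0) (matscale (alpha s0) (g ** E q p ** gi)) \<in> mat_span (mlpoly_image m alpha)"
    by (rule span_scale')
  then have X: "E q p + E p p - E q q - E p q \<in> mat_span (mlpoly_image m alpha)"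
    unfolding matscale_inv[OF a0] conj .
  have "E p p - E q q = (E q p + E p p - E q q - E p q) - E q p + (E p q :: 'a^'n^'n)"
    by (simp add: algebra_simps)
  also have "\<dots> \<in> mat_span (mlpoly_image m alpha)"
  proof -
    have qp: "q \<noteq> p" using pq by simp
    have o1: "(E p q :: 'a^'n^'n) \<in> mat_span (mlpoly_image m alpha)"
      by (rule offdiag[OF s0]) (fact a0 m mn pq)+
    have o2: "(E q p :: 'a^'n^'n) \<in> mat_span (mlpoly_image m alpha)"
      by (rule offdiag[OF s0]) (fact a0 m mn qp)+
    show ?thesis by (intro span_add' span_diff' X o1 o2)
  qed
  finally show ?thesis .
qed


theorem theorem3p1:
  fixes alpha :: "(nat \<Rightarrow> nat) \<Rightarrow> 'a::field"
    and m :: nat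
  assumes "CARD('n::finite) \<ge> 2"
    and "m \<ge> 2"
    and "of_nat CARD('n) \<noteq> (0::'a)"
    and "\<exists>s. s permutes {1..m} \<and> alpha s \<noteq> 0"
    and "2 * CARD('n) \<ge> m + 1"
  shows "(sl :: ('a^'n^'n) set) \<subseteq> mat_span (mlpoly_image m alpha)"
proof
  fix A :: "'a^'n^'n"
  assume "A \<in> sl"
  then have tr: "trace A = 0" unfolding sl_def by simp
  obtain s0 where s0: "s0 permutes {1..m}" and a0: "alpha s0 \<noteq> 0" using assms(4) by blast
  obtain r :: 'n where True by simp
  define P where "P = {(i, j). (i::'n) \<noteq> j}"
  define B where "B = (\<Sum>z\<in>P. matscale (A $ fst z $ snd z) (E (fst z) (snd z) :: 'a^'n^'n))"
  define D where "D = (\<Sum>i\<in>UNIV. matscale (A $ i $ i) (E i i - E r r :: 'a^'n^'n))"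
  have Bc: "B $ x $ y = (if x \<noteq> y then A $ x $ y else 0)" for x y
  proof -
    have "B $ x $ y = (\<Sum>z\<in>P. A $ fst z $ snd z * (if x = fst z \<and> y = snd z then 1 else 0))"
      unfolding B_def by (simp add: matscale_def E_def)
    also have "\<dots> = (\<Sum>z\<in>P. if z = (x, y) then A $ x $ y else 0)"
      by (rule sum.cong) auto
    also have "\<dots> = (if (x, y) \<in> P then A $ x $ y else 0)"
      by (simp add: sum.delta')
    finally show ?thesis unfolding P_def by simp
  qed
  have Dc: "D $ x $ y = (if x = y then A $ x $ x else 0) - (if x = r \<and> y = r then trace A else 0)" for x y
  proof -
    have "D $ x $ y = (\<Sum>i\<in>UNIV. A $ i $ i * ((if x = i \<and> y = i then 1 else 0) - (if x = r \<and> y = r then 1 else 0)))"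
      unfolding D_def by (simp add: matscale_def E_def)
    also have "\<dots> = (\<Sum>i\<in>UNIV. if i = x then (if x = y then A $ x $ x else 0) else 0)
        - (\<Sum>i\<in>UNIV. A $ i $ i) * (if x = r \<and> y = r then 1 else 0)"
      unfolding right_diff_distrib sum_subtractf sum_distrib_right
      by (intro arg_cong2[where f = "(-)"] sum.cong) auto
    also have "\<dots> = (if x = y then A $ x $ x else 0) - (if x = r \<and> y = r then trace A else 0)"
      by (simp add: trace_def)
    finally show ?thesis .
  qed
  have "A = B + D"
    unfolding vec_eq_iff using tr by (simp add: Bc Dc)
  also have "\<dots> \<in> mat_span (mlpoly_image m alpha)"
  proof (rule span_add')
    show "B \<in> mat_span (mlpoly_image m alpha)"
      unfolding B_def
      by (rule span_sum', rule span_scale', rule offdiag[OF s0])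
        (use a0 assms(2,5) in \<open>auto simp: P_def\<close>)
    show "D \<in> mat_span (mlpoly_image m alpha)"
      unfolding D_def
    proof (rule span_sum', rule span_scale')
      fix i :: 'n
      show "E i i - E r r \<in> mat_span (mlpoly_image m alpha)"
      proof (cases "i = r")
        case True
        then show ?thesis using span_zero' by simp
      next
        case False
        show ?thesis by (rule diag[OF s0]) (fact a0 assms(2) assms(5) False)+
      qed
    qed
  qed
  finally show "A \<in> mat_span (mlpoly_image m alpha)" .
qed


end
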